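(* Let $d \ge 1$, $\sigma>0$, $\beta>0$, and $\mathbf{p}\in\mathbb{Z}^d$. Let $H:\mathbb{R}^d\to\mathbb{Z}^d$ be the quantization map $H(\mathbf{x}) = \lfloor \mathbf{x} + \mathbf{0.5}\rfloor$, where the floor is applied coordinatewise and $\mathbf{0.5}=(0.5,\dots,0.5)$. Let $\mathbf{x}\sim\mathcal{N}(\mathbf{p},\sigma^2\mathbf{I}_d)$ (a natural query) and, independently, $\boldsymbol{\delta}\sim\mathcal{N}(0,\beta^2\mathbf{I}_d)$ (a perturbation), so that $\mathbf{x}+\boldsymbol{\delta}$ is an attack query. Define the false positive rate $\alpha^{fp} = \mathbb{P}[H(\mathbf{x})\neq \mathbf{p}]$ and the detection rate $\alpha^{det} = \mathbb{P}[H(\mathbf{x}+\boldsymbol{\delta}) = H(\mathbf{x})]$. Then $$\alpha^{det} \le 1 - \bigl(2 - 2\Phi(0.5\,\beta^{-1})\bigr)^d\,(1-\alpha^{fp}),$$ where $\Phi$ is the cumulative distribution function of the standard normal distribution $\mathcal{N}(0,1)$.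
   Context: Toy model of a stateful defense: a query is flagged as an attack query if and only if its feature vector $H(\cdot)$ is exactly equal to that of a prior query; here the prior query is the natural query $\mathbf{x}$, and a natural query is counted as correctly (non-falsely) handled when $H(\mathbf{x})=\mathbf{p}$, so $1-\alpha^{fp}=\mathbb{P}[H(\mathbf{x})=\mathbf{p}]$. *)

theory Defs
  imports "HOL-Probability.Probability"
begin

definition gauss_vec :: "real^'d \<Rightarrow> real \<Rightarrow> (real^'d) measure" where
  "gauss_vec m s = density lborel (\<lambda>x. \<Prod>i\<in>UNIV. normal_density (m$i) s (x$i))"

definition quantH :: "real^'d \<Rightarrow> int^'d" where
  "quantH x = (\<chi> i. \<lfloor>x$i + 1/2\<rfloor>)"

definition Phi :: "real \<Rightarrow> real" where
  "Phi = cdf (density lborel std_normal_density)"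

definition joint_law :: "int^'d \<Rightarrow> real \<Rightarrow> real \<Rightarrow> ((real^'d) \<times> (real^'d)) measure" where
  "joint_law p \<sigma> \<beta> = gauss_vec (\<chi> i. of_int (p$i)) \<sigma> \<Otimes>\<^sub>M gauss_vec 0 \<beta>"

definition alpha_fp :: "int^'d \<Rightarrow> real \<Rightarrow> real" where
  "alpha_fp p \<sigma> = measure (gauss_vec (\<chi> i. of_int (p$i)) \<sigma>) {x. quantH x \<noteq> p}"

definition alpha_det :: "int^'d \<Rightarrow> real \<Rightarrow> real \<Rightarrow> real" where
  "alpha_det p \<sigma> \<beta> = measure (joint_law p \<sigma> \<beta>) {(x, \<delta>). quantH (x + \<delta>) = quantH x}"

end

theory Submission
  imports Defs
begin

lemma Basis_vec_range: "(Basis :: (real^'d) set) = range (\<lambda>j. axis j 1)"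
  by (auto simp: Basis_vec_def)

lemma inj_axis1: "inj (\<lambda>j::'d::finite. axis j (1::real))"
  by (auto intro!: injI simp: axis_eq_axis)

lemma prod_vec_lborel:
  fixes g :: "'d::finite \<Rightarrow> real \<Rightarrow> ennreal"
  assumes [measurable]: "\<And>j. g j \<in> borel_measurable borel"
  shows "(\<integral>\<^sup>+x. (\<Prod>j\<in>UNIV. g j (x$j)) \<partial>(lborel :: (real^'d) measure)) = (\<Prod>j\<in>UNIV. \<integral>\<^sup>+t. g j t \<partial>lborel)"
proof -
  define F where "F b = g (inv (\<lambda>j::'d. axis j (1::real)) b)" for b
  have F: "F (axis j 1) = g j" for j
    unfolding F_def by (simp add: inv_f_f[OF inj_axis1])
  have "(\<integral>\<^sup>+x. (\<Prod>b\<in>Basis. F b (x \<bullet> b)) \<partial>(lborel :: (real^'d) measure)) = (\<Prod>b\<in>Basis. (\<integral>\<^sup>+x. F b x \<partial>lborel))"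
    by (rule nn_integral_lborel_prod) (auto simp: F_def)
  moreover have "(\<Prod>b\<in>Basis. F b ((x::real^'d) \<bullet> b)) = (\<Prod>j\<in>UNIV. g j (x$j))" for x
    unfolding Basis_vec_range
    by (subst prod.reindex[OF inj_axis1]) (simp add: F inner_axis)
  moreover have "(\<Prod>b\<in>(Basis::(real^'d) set). (\<integral>\<^sup>+x. F b x \<partial>lborel)) = (\<Prod>j\<in>UNIV. \<integral>\<^sup>+t. g j t \<partial>lborel)"
    unfolding Basis_vec_range
    by (subst prod.reindex[OF inj_axis1]) (simp add: F)
  ultimately show ?thesis by simp
qed

lemma prod_gauss:
  fixes g :: "'d::finite \<Rightarrow> real \<Rightarrow> ennreal"
  assumes [measurable]: "\<And>j. g j \<in> borel_measurable borel"
  shows "(\<integral>\<^sup>+x. (\<Prod>j\<in>UNIV. g j (x$j)) \<partial>gauss_vec m s) =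
     (\<Prod>j\<in>UNIV. \<integral>\<^sup>+t. ennreal (normal_density (m$j) s t) * g j t \<partial>lborel)"
proof -
  have "(\<integral>\<^sup>+x. (\<Prod>j\<in>UNIV. g j (x$j)) \<partial>gauss_vec m s) =
    (\<integral>\<^sup>+x. ennreal (\<Prod>i\<in>UNIV. normal_density (m $ i) s (x $ i)) * (\<Prod>j\<in>UNIV. g j (x$j)) \<partial>lborel)"
    unfolding gauss_vec_def by (subst nn_integral_density) auto
  also have "\<dots> = (\<integral>\<^sup>+x. (\<Prod>j\<in>UNIV. ennreal (normal_density (m$j) s (x$j)) * g j (x$j)) \<partial>lborel)"
    by (simp add: prod.distrib prod_ennreal)
  also have "\<dots> = (\<Prod>j\<in>UNIV. \<integral>\<^sup>+t. ennreal (normal_density (m$j) s t) * g j t \<partial>lborel)"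
    by (rule prod_vec_lborel) auto
  finally show ?thesis .
qed

lemma prob_space_gauss:
  fixes m :: "real^'d"
  assumes "s > 0" shows "prob_space (gauss_vec m s)"
proof
  have "emeasure (gauss_vec m s) (space (gauss_vec m s)) = (\<integral>\<^sup>+x. (\<Prod>j\<in>(UNIV::'d set). (\<lambda>_. 1::ennreal) (x$j)) \<partial>gauss_vec m s)"
    by simp
  also have "\<dots> = (\<Prod>j\<in>UNIV. \<integral>\<^sup>+t. ennreal (normal_density (m$j) s t) \<partial>lborel)"
    by (subst prod_gauss) auto
  also have "\<dots> = 1"
  proof (rule prod.neutral, intro ballI)
    fix j
    interpret prob_space "density lborel (normal_density (m$j) s)" using assms(1) by (rule prob_space_normal_density)
    show "(\<integral>\<^sup>+t. ennreal (normal_density (m$j) s t) \<partial>lborel) = 1"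
      using emeasure_space_1 by (simp add: emeasure_density)
  qed
  finally show "emeasure (gauss_vec m s) (space (gauss_vec m s)) = 1" .
qed

lemma sets_gauss[simp, measurable_cong]: "sets (gauss_vec m s) = sets borel"
  by (simp add: gauss_vec_def)

lemma marginal_gauss:
  fixes m :: "real^'d"
  assumes "s > 0" and S[measurable]: "S \<in> sets borel"
  shows "emeasure (gauss_vec m s) {x. x$i \<in> S} = emeasure (density lborel (normal_density (m$i) s)) S"
proof -
  define g where "g j = (if j = i then indicator S else (\<lambda>_. 1::ennreal))" for j
  have [measurable]: "g j \<in> borel_measurable borel" for j by (simp add: g_def)
  have "{x. x$i \<in> S} \<in> sets (gauss_vec m s)" by simp
  then have "emeasure (gauss_vec m s) {x. x$i \<in> S} = (\<integral>\<^sup>+x. indicator {x. x$i \<in> S} x \<partial>gauss_vec m s)"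
    by simp
  also have "\<dots> = (\<integral>\<^sup>+x. (\<Prod>j\<in>UNIV. g j (x$j)) \<partial>gauss_vec m s)"
  proof (intro nn_integral_cong)
    fix x :: "real^'d"
    have "(\<Prod>j\<in>UNIV. g j (x$j)) = g i (x$i) * (\<Prod>j\<in>UNIV-{i}. g j (x$j))"
      by (simp add: prod.remove)
    also have "(\<Prod>j\<in>UNIV-{i}. g j (x$j)) = 1"
      by (rule prod.neutral) (simp add: g_def)
    finally show "indicator {x. x$i \<in> S} x = (\<Prod>j\<in>UNIV. g j (x$j))"
      by (simp add: g_def indicator_def)
  qed
  also have "\<dots> = (\<Prod>j\<in>UNIV. \<integral>\<^sup>+t. ennreal (normal_density (m$j) s t) * g j t \<partial>lborel)"
    by (rule prod_gauss) simp
  also have "\<dots> = (\<Prod>j\<in>UNIV. if j = i then emeasure (density lborel (normal_density (m$i) s)) S else 1)"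
  proof (rule prod.cong[OF refl])
    fix j
    interpret prob_space "density lborel (normal_density (m$j) s)" using assms(1) by (rule prob_space_normal_density)
    show "(\<integral>\<^sup>+t. ennreal (normal_density (m$j) s t) * g j t \<partial>lborel) = (if j = i then emeasure (density lborel (normal_density (m$i) s)) S else 1)"
      using emeasure_space_1 by (auto simp: emeasure_density g_def)
  qed
  also have "\<dots> = emeasure (density lborel (normal_density (m$i) s)) S"
    by simp
  finally show ?thesis .
qed

lemma std_ps: "prob_space std_normal_distribution"
  by (rule prob_space_normal_density) simp

lemma std_even: "std_normal_density (-z) = std_normal_density z"
  by (simp add: std_normal_density_def)

lemma std_reflect:
  assumes [measurable]: "Measurable.pred borel P"
  shows "emeasure std_normal_distribution {z. P (-z)} = emeasure std_normal_distribution {z. P z}"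
proof -
  define f where "f z = ennreal (std_normal_density z) * indicator {z. P z} z" for z
  have [measurable]: "f \<in> borel_measurable borel" unfolding f_def by measurable
  have "emeasure std_normal_distribution {z. P z} = (\<integral>\<^sup>+z. f z \<partial>lborel)"
    by (simp add: emeasure_density f_def)
  also have "\<dots> = ennreal \<bar>-1\<bar> * (\<integral>\<^sup>+z. f (0 + (-1) * z) \<partial>lborel)"
    by (rule nn_integral_real_affine) auto
  also have "\<dots> = (\<integral>\<^sup>+z. ennreal (std_normal_density z) * indicator {z. P (-z)} z \<partial>lborel)"
    by (simp add: f_def std_even indicator_def)
  also have "\<dots> = emeasure std_normal_distribution {z. P (-z)}"
    by (simp add: emeasure_density)
  finally show ?thesis ..
qed

lemma nd_scale:
  assumes "\<beta> > 0"
  shows "\<beta> * normal_density 0 \<beta> (\<beta> * z) = std_normal_density z"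
  using assms by (simp add: normal_density_def real_sqrt_mult power_mult_distrib field_simps)

lemma std_scale:
  assumes b: "\<beta> > 0" and [measurable]: "S \<in> sets borel"
  shows "emeasure (density lborel (normal_density 0 \<beta>)) S = emeasure std_normal_distribution {z. \<beta> * z \<in> S}"
proof -
  define f where "f u = ennreal (normal_density 0 \<beta> u) * indicator S u" for u
  have [measurable]: "f \<in> borel_measurable borel" unfolding f_def by measurable
  have "emeasure (density lborel (normal_density 0 \<beta>)) S = (\<integral>\<^sup>+z. f z \<partial>lborel)"
    by (simp add: emeasure_density f_def)
  also have "\<dots> = ennreal \<bar>\<beta>\<bar> * (\<integral>\<^sup>+z. f (0 + \<beta> * z) \<partial>lborel)"
    by (rule nn_integral_real_affine) (use b in auto)
  also have "\<dots> = (\<integral>\<^sup>+z. ennreal \<beta> * f (\<beta> * z) \<partial>lborel)"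
    using b by (simp add: nn_integral_cmult)
  also have "\<dots> = (\<integral>\<^sup>+z. ennreal (std_normal_density z) * indicator {z. \<beta> * z \<in> S} z \<partial>lborel)"
  proof (rule nn_integral_cong)
    fix z
    have "ennreal \<beta> * ennreal (normal_density 0 \<beta> (\<beta> * z)) = ennreal (std_normal_density z)"
      using b nd_scale[OF b, of z] by (simp add: ennreal_mult'[symmetric])
    then show "ennreal \<beta> * f (\<beta> * z) = ennreal (std_normal_density z) * indicator {z. \<beta> * z \<in> S} z"
      by (simp add: f_def indicator_def mult.assoc[symmetric])
  qed
  also have "\<dots> = emeasure std_normal_distribution {z. \<beta> * z \<in> S}"
    by (simp add: emeasure_density)
  finally show ?thesis .
qed

lemma std_mono: "z\<^sup>2 \<le> w\<^sup>2 \<Longrightarrow> std_normal_density w \<le> std_normal_density z"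
  unfolding std_normal_density_def
  by (intro mult_left_mono) auto

lemma std_shift:
  assumes "0 \<le> s" "s \<le> a"
  shows "emeasure std_normal_distribution {a<..a+s} \<le> emeasure std_normal_distribution {a-s<..a}"
proof -
  define f where "f u = ennreal (std_normal_density u) * indicator {a-s<..a} u" for u
  have [measurable]: "f \<in> borel_measurable borel" unfolding f_def by measurable
  have "emeasure std_normal_distribution {a<..a+s} = (\<integral>\<^sup>+z. ennreal (std_normal_density z) * indicator {a<..a+s} z \<partial>lborel)"
    by (simp add: emeasure_density)
  also have "\<dots> \<le> (\<integral>\<^sup>+z. f (-s + 1 * z) \<partial>lborel)"
  proof (rule nn_integral_mono)
    fix z
    show "ennreal (std_normal_density z) * indicator {a<..a+s} z \<le> f (-s + 1 * z)"
    proof (cases "z \<in> {a<..a+s}")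
      case True
      then have "(z - s)\<^sup>2 \<le> z\<^sup>2" using assms by (intro power_mono) auto
      then have "std_normal_density z \<le> std_normal_density (z - s)" by (rule std_mono)
      then show ?thesis using True by (simp add: f_def indicator_def)
    qed (auto simp: indicator_def)
  qed
  also have "\<dots> = (\<integral>\<^sup>+z. f z \<partial>lborel)"
    using nn_integral_real_affine[of f 1 "-s"] by simp
  also have "\<dots> = emeasure std_normal_distribution {a-s<..a}"
    by (simp add: emeasure_density f_def)
  finally show ?thesis .
qed

lemma std_core:
  assumes "0 \<le> s" "s \<le> a"
  shows "2 * measure std_normal_distribution {a<..} \<le> measure std_normal_distribution {z. z < -a-s \<or> z > a-s}"
proof -
  interpret prob_space std_normal_distribution by (rule std_ps)
  let ?m = "measure std_normal_distribution"
  have h1: "?m {z. z < -a} = ?m {a<..}"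
  proof -
    have "emeasure std_normal_distribution {z. a < -z} = emeasure std_normal_distribution {z. a < z}"
      by (rule std_reflect) simp
    moreover have "{z. a < -z} = {z. z < -a}" by auto
    moreover have "{z. a < z} = {a<..}" by auto
    ultimately show ?thesis by (simp add: measure_def)
  qed
  have h2: "?m {z. z < -a} = ?m {z. z < -a-s} + ?m {z. -a-s \<le> z \<and> z < -a}"
  proof -
    have "{z. z < -a} = {z. z < -a-s} \<union> {z. -a-s \<le> z \<and> z < -a}" using assms by auto
    moreover have "?m ({z. z < -a-s} \<union> {z. -a-s \<le> z \<and> z < -a}) = ?m {z. z < -a-s} + ?m {z. -a-s \<le> z \<and> z < -a}"
      by (intro finite_measure_Union) auto
    ultimately show ?thesis by simp
  qed
  have h3: "?m {z. -a-s \<le> z \<and> z < -a} = ?m {a<..a+s}"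
  proof -
    have "emeasure std_normal_distribution {z. a < -z \<and> -z \<le> a+s} = emeasure std_normal_distribution {z. a < z \<and> z \<le> a+s}"
      by (rule std_reflect) simp
    moreover have "{z. a < -z \<and> -z \<le> a+s} = {z. -a-s \<le> z \<and> z < -a}" by auto
    moreover have "{z. a < z \<and> z \<le> a+s} = {a<..a+s}" by auto
    ultimately show ?thesis by (simp add: measure_def)
  qed
  have h4: "?m {a<..a+s} \<le> ?m {a-s<..a}"
    using std_shift[OF assms] by (simp add: emeasure_eq_measure)
  have h5: "?m {z. z < -a-s \<or> z > a-s} = ?m {z. z < -a-s} + ?m {a-s<..a} + ?m {a<..}"
  proof -
    have "{z. z < -a-s \<or> z > a-s} = ({z. z < -a-s} \<union> {a-s<..a}) \<union> {a<..}" using assms by auto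
    moreover have "?m (({z. z < -a-s} \<union> {a-s<..a}) \<union> {a<..}) = ?m ({z. z < -a-s} \<union> {a-s<..a}) + ?m {a<..}"
      using assms by (intro finite_measure_Union) auto
    moreover have "?m ({z. z < -a-s} \<union> {a-s<..a}) = ?m {z. z < -a-s} + ?m {a-s<..a}"
      using assms by (intro finite_measure_Union) auto
    ultimately show ?thesis by simp
  qed
  show ?thesis using h1 h2 h3 h4 h5 by linarith
qed

lemma Phi_tail: "2 - 2 * Phi a = 2 * measure std_normal_distribution {a<..}"
proof -
  interpret prob_space std_normal_distribution by (rule std_ps)
  have "measure std_normal_distribution ({..a} \<union> {a<..}) = measure std_normal_distribution {..a} + measure std_normal_distribution {a<..}"
    by (intro finite_measure_Union) auto
  moreover have "{..a} \<union> {a<..} = space std_normal_distribution" by auto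
  ultimately show ?thesis using prob_space by (simp add: Phi_def cdf_def)
qed

lemma std_core2:
  assumes "\<bar>s\<bar> \<le> a"
  shows "ennreal (2 - 2 * Phi a) \<le> emeasure std_normal_distribution {z. z < -a-s \<or> z > a-s}"
proof -
  interpret prob_space std_normal_distribution by (rule std_ps)
  have "2 - 2 * Phi a \<le> measure std_normal_distribution {z. z < -a-s \<or> z > a-s}"
  proof (cases "s \<ge> 0")
    case True
    then show ?thesis using std_core[of s a] assms by (simp add: Phi_tail)
  next
    case False
    have "emeasure std_normal_distribution {z. -z < -a-s \<or> -z > a-s} = emeasure std_normal_distribution {z. z < -a-s \<or> z > a-s}"
      by (rule std_reflect) simp
    moreover have "{z. -z < -a-s \<or> -z > a-s} = {z. z < -a-(-s) \<or> z > a-(-s)}" by auto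
    ultimately have "measure std_normal_distribution {z. z < -a-(-s) \<or> z > a-(-s)} = measure std_normal_distribution {z. z < -a-s \<or> z > a-s}"
      by (simp add: measure_def)
    then show ?thesis using std_core[of "-s" a] assms False by (simp add: Phi_tail)
  qed
  then show ?thesis by (simp add: emeasure_eq_measure)
qed

lemma coord_bound:
  assumes b: "\<beta> > 0" and k: "\<lfloor>y + 1/2\<rfloor> = k"
  shows "ennreal (2 - 2 * Phi (0.5 / \<beta>)) \<le> emeasure (density lborel (normal_density 0 \<beta>)) {u. \<lfloor>y + u + 1/2\<rfloor> \<noteq> k}"
proof -
  define t where "t = y - k"
  have t: "-1/2 \<le> t" "t < 1/2" using k unfolding t_def floor_eq_iff by auto
  define a where "a = 0.5 / \<beta>"
  define s where "s = t / \<beta>"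
  have as: "\<bar>s\<bar> \<le> a" using t b unfolding a_def s_def by (auto simp: abs_le_iff divide_simps)
  have "ennreal (2 - 2 * Phi (0.5 / \<beta>)) \<le> emeasure std_normal_distribution {z. z < -a-s \<or> z > a-s}"
    using std_core2[OF as] by (simp add: a_def)
  also have "{z. z < -a-s \<or> z > a-s} = {z. \<beta> * z \<in> {u. u < -1/2 - t \<or> u > 1/2 - t}}"
    using b unfolding a_def s_def by (auto simp: field_simps)
  also have "emeasure std_normal_distribution \<dots> = emeasure (density lborel (normal_density 0 \<beta>)) {u. u < -1/2 - t \<or> u > 1/2 - t}"
    by (rule std_scale[symmetric, OF b]) simp
  also have "\<dots> \<le> emeasure (density lborel (normal_density 0 \<beta>)) {u. \<lfloor>y + u + 1/2\<rfloor> \<noteq> k}"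
  proof (rule emeasure_mono)
    show "{u. u < -1/2 - t \<or> u > 1/2 - t} \<subseteq> {u. \<lfloor>y + u + 1/2\<rfloor> \<noteq> k}"
      unfolding t_def by (auto simp: floor_eq_iff)
    show "{u. \<lfloor>y + u + 1/2\<rfloor> \<noteq> k} \<in> sets (density lborel (normal_density 0 \<beta>))"
      by simp
  qed
  finally show ?thesis .
qed

lemma quantH_eq: "quantH u = quantH v \<longleftrightarrow> (\<forall>i. \<lfloor>u$i + 1/2\<rfloor> = \<lfloor>v$i + 1/2\<rfloor>)"
  by (simp add: quantH_def vec_eq_iff)

lemma quantH_eq_p: "quantH u = p \<longleftrightarrow> (\<forall>i. \<lfloor>u$i + 1/2\<rfloor> = p$i)"
  by (simp add: quantH_def vec_eq_iff)


lemma borel_measurable_nth_comp[measurable (raw)]: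
  fixes f :: "'a \<Rightarrow> real^'n"
  shows "f \<in> borel_measurable M \<Longrightarrow> (\<lambda>x. f x $ i) \<in> borel_measurable M"
  using measurable_compose[OF _ borel_measurable_nth] by blast

lemma pred_floor_eq[measurable]:
  fixes f g :: "'a \<Rightarrow> real"
  assumes [measurable]: "f \<in> borel_measurable M" "g \<in> borel_measurable M"
  shows "Measurable.pred M (\<lambda>z. \<lfloor>f z\<rfloor> = \<lfloor>g z\<rfloor>)"
  by measurable

lemma pred_floor_eq_c[measurable]:
  fixes f :: "'a \<Rightarrow> real"
  assumes [measurable]: "f \<in> borel_measurable M"
  shows "Measurable.pred M (\<lambda>z. \<lfloor>f z\<rfloor> = c)"
  by measurable

lemma D_meas: "{(x::real^'d, \<delta>::real^'d). quantH (x + \<delta>) = quantH x} \<in> sets (borel \<Otimes>\<^sub>M borel)"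
proof -
  have "Measurable.pred (borel \<Otimes>\<^sub>M borel) (\<lambda>z::(real^'d)\<times>(real^'d). \<forall>i. \<lfloor>(fst z + snd z) $ i + 1 / 2\<rfloor> = \<lfloor>fst z $ i + 1 / 2\<rfloor>)"
    by measurable
  then show ?thesis by (simp add: pred_def case_prod_beta' space_pair_measure quantH_eq)
qed

lemma E_meas: "{(x::real^'d, \<delta>::real^'d). quantH x = p \<and> quantH (x + \<delta>) \<noteq> p} \<in> sets (borel \<Otimes>\<^sub>M borel)"
proof -
  have "Measurable.pred (borel \<Otimes>\<^sub>M borel) (\<lambda>z::(real^'d)\<times>(real^'d). (\<forall>i. \<lfloor>fst z $ i + 1 / 2\<rfloor> = p$i) \<and> \<not> (\<forall>i. \<lfloor>(fst z + snd z) $ i + 1 / 2\<rfloor> = p$i))"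
    by measurable
  then show ?thesis by (simp add: pred_def case_prod_beta' space_pair_measure quantH_eq_p)
qed

lemma F_meas: "{x::real^'d. quantH x = p} \<in> sets borel"
proof -
  have "Measurable.pred borel (\<lambda>x::real^'d. \<forall>i. \<lfloor>x $ i + 1 / 2\<rfloor> = p$i)"
    by measurable
  then show ?thesis by (simp add: pred_def quantH_eq_p)
qed

theorem theorem1:
  fixes p :: "int^'d" and \<sigma> \<beta> :: real
  assumes "\<sigma> > 0" and "\<beta> > 0"
  shows "alpha_det p \<sigma> \<beta>
           \<le> 1 - (2 - 2 * Phi (0.5 / \<beta>)) ^ CARD('d) * (1 - alpha_fp p \<sigma>)"
proof -
  define P :: "real^'d" where "P = (\<chi> i. of_int (p$i))"
  define X where "X = gauss_vec P \<sigma>"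
  define Dl :: "(real^'d) measure" where "Dl = gauss_vec 0 \<beta>"
  define q where "q = 2 - 2 * Phi (0.5 / \<beta>)"
  interpret X: prob_space X unfolding X_def by (rule prob_space_gauss) fact
  interpret Dl: prob_space Dl unfolding Dl_def by (rule prob_space_gauss) fact
  interpret J: pair_prob_space X Dl ..
  have J: "joint_law p \<sigma> \<beta> = X \<Otimes>\<^sub>M Dl" by (simp add: joint_law_def X_def Dl_def P_def)
  define D where "D = {(x::real^'d, \<delta>::real^'d). quantH (x + \<delta>) = quantH x}"
  define E where "E = {(x::real^'d, \<delta>::real^'d). quantH x = p \<and> quantH (x + \<delta>) \<noteq> p}"
  define F where "F = {x::real^'d. quantH x = p}"
  have sX[measurable_cong]: "sets X = sets borel" by (simp add: X_def)
  have sD[measurable_cong]: "sets Dl = sets borel" by (simp add: Dl_def)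
  have Dm: "D \<in> sets (X \<Otimes>\<^sub>M Dl)"
    unfolding D_def sets_pair_measure_cong[OF sX sD] by (rule D_meas)
  have Em: "E \<in> sets (X \<Otimes>\<^sub>M Dl)"
    unfolding E_def sets_pair_measure_cong[OF sX sD] by (rule E_meas)
  have Fm: "F \<in> sets X"
    unfolding F_def sX by (rule F_meas)
  have "D \<inter> E = {}" by (auto simp: D_def E_def)
  then have "measure (X \<Otimes>\<^sub>M Dl) (D \<union> E) = measure (X \<Otimes>\<^sub>M Dl) D + measure (X \<Otimes>\<^sub>M Dl) E"
    using Dm Em by (intro J.finite_measure_Union) auto
  moreover have "measure (X \<Otimes>\<^sub>M Dl) (D \<union> E) \<le> 1" by (rule J.prob_le_1)
  ultimately have det: "alpha_det p \<sigma> \<beta> \<le> 1 - measure (X \<Otimes>\<^sub>M Dl) E"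
    by (simp add: alpha_det_def J D_def)
  have fp: "1 - alpha_fp p \<sigma> = measure X F"
  proof -
    have "{x. quantH x \<noteq> p} = space X - F" by (auto simp: F_def X_def gauss_vec_def)
    then show ?thesis using X.prob_compl[OF Fm] by (simp add: alpha_fp_def X_def P_def)
  qed
  obtain i0 :: 'd where True by simp
  have slice: "ennreal q \<le> emeasure Dl (Pair x -` E)" if "x \<in> F" for x
  proof -
    have "ennreal q \<le> emeasure (density lborel (normal_density 0 \<beta>)) {u. \<lfloor>x$i0 + u + 1/2\<rfloor> \<noteq> p$i0}"
      unfolding q_def using that by (intro coord_bound assms) (simp add: F_def quantH_eq_p)
    also have "\<dots> = emeasure Dl {\<delta>. \<delta>$i0 \<in> {u. \<lfloor>x$i0 + u + 1/2\<rfloor> \<noteq> p$i0}}"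
      unfolding Dl_def by (subst marginal_gauss) (use assms in auto)
    also have "\<dots> \<le> emeasure Dl (Pair x -` E)"
    proof (rule emeasure_mono)
      show "{\<delta>. \<delta>$i0 \<in> {u. \<lfloor>x$i0 + u + 1/2\<rfloor> \<noteq> p$i0}} \<subseteq> Pair x -` E"
        using that by (auto simp: E_def F_def quantH_eq_p)
      show "Pair x -` E \<in> sets Dl" using Em by (rule sets_Pair1)
    qed
    finally show ?thesis .
  qed
  have q1: "q \<le> 1"
  proof -
    have "P \<in> F" by (simp add: F_def quantH_eq_p P_def floor_eq_iff)
    then have "ennreal q \<le> emeasure Dl (Pair P -` E)" by (rule slice)
    also have "\<dots> \<le> 1" by (rule Dl.emeasure_le_1)
    finally show ?thesis by (simp add: ennreal_le_1)
  qed
  have q0: "0 \<le> q" unfolding q_def Phi_tail by simp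
  have "ennreal (q * measure X F) = ennreal q * emeasure X F"
    using q0 by (simp add: X.emeasure_eq_measure ennreal_mult)
  also have "\<dots> = (\<integral>\<^sup>+x. ennreal q * indicator F x \<partial>X)"
    using Fm by (simp add: nn_integral_cmult_indicator)
  also have "\<dots> \<le> (\<integral>\<^sup>+x. emeasure Dl (Pair x -` E) \<partial>X)"
    by (intro nn_integral_mono) (auto simp: indicator_def slice)
  also have "\<dots> = emeasure (X \<Otimes>\<^sub>M Dl) E"
    by (rule Dl.emeasure_pair_measure_alt[symmetric]) (rule Em)
  finally have mE: "q * measure X F \<le> measure (X \<Otimes>\<^sub>M Dl) E"
    by (simp add: J.emeasure_eq_measure)
  have "q ^ CARD('d) \<le> q ^ 1"
    using q0 q1 by (intro power_decreasing) auto
  then have "q ^ CARD('d) * measure X F \<le> q * measure X F"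
    by (intro mult_right_mono) auto
  then show ?thesis using det mE unfolding q_def fp by linarith
qed

end
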